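(* For every positive integer $N$ there exists a positive integer $m$ such that there are at least $N$ pairwise nonequivalent graphical Hadamard matrices of order $4^m$; that is, the number of nonequivalent graphical Hadamard matrices of order $4^m$ is unbounded as $m\to\infty$.
   Context: A Hadamard matrix of order $n$ is an $n\times n$ matrix $H$ with entries $\pm1$ such that $HH^{\top}=nI$. It is graphical if it is symmetric with constant diagonal. Two Hadamard matrices are equivalent if one can be obtained from the other by permuting rows, permuting columns, and multiplying rows and columns by $-1$. *)

theory Defs
  imports "HOL-Combinatorics.Permutations"
begin

text \<open>An n x n matrix is represented as a function nat => nat => int; only the
entries with indices in {0..<n} are relevant.\<close>

definition hadamard :: "nat \<Rightarrow> (nat \<Rightarrow> nat \<Rightarrow> int) \<Rightarrow> bool" where
  "hadamard n H \<longleftrightarrow>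
     (\<forall>i<n. \<forall>j<n. H i j = 1 \<or> H i j = -1) \<and>
     (\<forall>i<n. \<forall>j<n. (\<Sum>k<n. H i k * H j k) = (if i = j then int n else 0))"

definition graphical :: "nat \<Rightarrow> (nat \<Rightarrow> nat \<Rightarrow> int) \<Rightarrow> bool" where
  "graphical n H \<longleftrightarrow>
     (\<forall>i<n. \<forall>j<n. H i j = H j i) \<and> (\<exists>d. \<forall>i<n. H i i = d)"

definition graphical_hadamard :: "nat \<Rightarrow> (nat \<Rightarrow> nat \<Rightarrow> int) \<Rightarrow> bool" where
  "graphical_hadamard n H \<longleftrightarrow> hadamard n H \<and> graphical n H"

definition hadamard_equiv :: "nat \<Rightarrow> (nat \<Rightarrow> nat \<Rightarrow> int) \<Rightarrow> (nat \<Rightarrow> nat \<Rightarrow> int) \<Rightarrow> bool" where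
  "hadamard_equiv n H K \<longleftrightarrow>
     (\<exists>p q r c. p permutes {..<n} \<and> q permutes {..<n} \<and>
        (\<forall>i<n. r i = 1 \<or> r i = (-1::int)) \<and> (\<forall>j<n. c j = 1 \<or> c j = (-1::int)) \<and>
        (\<forall>i<n. \<forall>j<n. K i j = r i * c j * H (p i) (q j)))"

end

theory Submission
  imports Defs
begin


definition kron :: "nat \<Rightarrow> (nat \<Rightarrow> nat \<Rightarrow> int) \<Rightarrow> (nat \<Rightarrow> nat \<Rightarrow> int) \<Rightarrow> (nat \<Rightarrow> nat \<Rightarrow> int)" where
  "kron n A B i j = A (i div n) (j div n) * B (i mod n) (j mod n)"

lemma sum_split_mult: "(\<Sum>x<(m::nat)*n. f x) = (\<Sum>a<m. \<Sum>b<n. f (a*n+b))"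
proof (induction m)
  case 0 then show ?case by simp
next
  case (Suc m)
  have "(\<Sum>x<Suc m*n. f x) = (\<Sum>x<m*n + n. f x)" by (simp add: add.commute)
  also have "\<dots> = (\<Sum>x<m*n. f x) + (\<Sum>x=m*n..<m*n+n. f x)" by (simp add: lessThan_atLeast0 sum.atLeastLessThan_concat)
  also have "(\<Sum>x=m*n..<m*n+n. f x) = (\<Sum>b<n. f (m*n+b))"
    using sum.shift_bounds_nat_ivl[of f 0 "m*n" n] by (simp add: atLeast0LessThan add.commute)
  finally show ?case using Suc by simp
qed

lemma div_lt: "i < m * n \<Longrightarrow> i div n < (m::nat)"
  by (simp add: less_mult_imp_div_less)

lemma kron_hadamard:
  assumes A: "hadamard m A" and B: "hadamard n B"
  shows "hadamard (m*n) (kron n A B)"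
  unfolding hadamard_def
proof (intro conjI allI impI)
  fix i j assume i: "i < m*n" and j: "j < m*n"
  hence np: "n > 0" by (cases n) auto
  have ia: "i div n < m" "j div n < m" using i j div_lt by auto
  have ib: "i mod n < n" "j mod n < n" using np by auto
  show "kron n A B i j = 1 \<or> kron n A B i j = -1"
  proof -
    have "A (i div n) (j div n) = 1 \<or> A (i div n) (j div n) = -1" using A ia unfolding hadamard_def by blast
    moreover have "B (i mod n) (j mod n) = 1 \<or> B (i mod n) (j mod n) = -1" using B ib unfolding hadamard_def by blast
    ultimately show ?thesis unfolding kron_def by auto
  qed
  have "(\<Sum>k<m*n. kron n A B i k * kron n A B j k)
      = (\<Sum>a<m. \<Sum>b<n. kron n A B i (a*n+b) * kron n A B j (a*n+b))"
    by (rule sum_split_mult)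
  also have "\<dots> = (\<Sum>a<m. \<Sum>b<n. (A (i div n) a * A (j div n) a) * (B (i mod n) b * B (j mod n) b))"
    using np by (intro sum.cong refl) (simp add: kron_def algebra_simps)
  also have "\<dots> = (\<Sum>a<m. A (i div n) a * A (j div n) a) * (\<Sum>b<n. B (i mod n) b * B (j mod n) b)"
    by (simp add: sum_product)
  also have "\<dots> = (if i div n = j div n then int m else 0) * (if i mod n = j mod n then int n else 0)"
    using A B ia ib unfolding hadamard_def by simp
  also have "\<dots> = (if i = j then int (m*n) else 0)"
  proof -
    have ij: "i = j" if h: "i div n = j div n" "i mod n = j mod n"
    proof -
      have "i = i div n * n + i mod n" by (rule div_mult_mod_eq[symmetric])
      also have "\<dots> = j div n * n + j mod n" using h by (simp only:)
      also have "\<dots> = j" by (rule div_mult_mod_eq)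
      finally show ?thesis .
    qed
    show ?thesis
    proof (cases "i = j")
      case True thus ?thesis by simp
    next
      case False thus ?thesis using ij by auto
    qed
  qed
  finally show "(\<Sum>k<m*n. kron n A B i k * kron n A B j k) = (if i = j then int (m*n) else 0)" .
qed

lemma kron_graphical:
  assumes A: "graphical m A" and B: "graphical n B"
  shows "graphical (m*n) (kron n A B)"
proof -
  obtain dA where dA: "\<forall>i<m. A i i = dA" using A unfolding graphical_def by blast
  obtain dB where dB: "\<forall>i<n. B i i = dB" using B unfolding graphical_def by blast
  show ?thesis unfolding graphical_def
  proof (intro conjI allI impI exI)
    fix i j assume i: "i < m*n" and j: "j < m*n"
    hence np: "n > 0" by (cases n) auto
    show "kron n A B i j = kron n A B j i" using A B div_lt[OF i] div_lt[OF j] np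
      unfolding graphical_def kron_def by simp
  next
    fix i assume i: "i < m*n"
    hence np: "n > 0" by (cases n) auto
    show "kron n A B i i = dA * dB" using dA dB div_lt[OF i] np unfolding kron_def by simp
  qed
qed


lemma sum_perm: assumes "p permutes {..<n}" shows "(\<Sum>i<n. g (p i)) = (\<Sum>i<n. g i)"
  using sum.reindex_bij_betw[OF permutes_imp_bij[OF assms], of g] by simp

lemma sum_prod_rev: "(\<Sum>a\<in>A. \<Sum>b\<in>B. f a * g b) = sum f A * sum g (B::'c set)" for f :: "'a \<Rightarrow> int"
  by (rule sum_product[symmetric])

definition Sv :: "nat \<Rightarrow> (nat \<Rightarrow> nat \<Rightarrow> int) \<Rightarrow> nat \<Rightarrow> nat \<Rightarrow> nat \<Rightarrow> nat \<Rightarrow> int" where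
  "Sv n H a b c d = (\<Sum>i<n. H i a * H i b * H i c * H i d)"

definition Mom :: "nat \<Rightarrow> nat \<Rightarrow> (nat \<Rightarrow> nat \<Rightarrow> int) \<Rightarrow> int" where
  "Mom e n H = (\<Sum>a<n. \<Sum>b<n. \<Sum>c<n. \<Sum>d<n. (Sv n H a b c d) ^ e)"

lemma Sv_kron:
  assumes "0 < n" "b1 < n" "b2 < n" "b3 < n" "b4 < n"
  shows "Sv (m*n) (kron n A B) (a1*n+b1) (a2*n+b2) (a3*n+b3) (a4*n+b4)
       = Sv m A a1 a2 a3 a4 * Sv n B b1 b2 b3 b4"
proof -
  have "Sv (m*n) (kron n A B) (a1*n+b1) (a2*n+b2) (a3*n+b3) (a4*n+b4)
     = (\<Sum>a<m. \<Sum>b<n. (A a a1 * A a a2 * A a a3 * A a a4) * (B b b1 * B b b2 * B b b3 * B b b4))"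
    unfolding Sv_def sum_split_mult using assms
    by (intro sum.cong refl) (simp add: kron_def algebra_simps)
  also have "\<dots> = Sv m A a1 a2 a3 a4 * Sv n B b1 b2 b3 b4"
    unfolding Sv_def by (rule sum_prod_rev)
  finally show ?thesis .
qed

lemma Mom_kron:
  assumes "0 < n"
  shows "Mom e (m*n) (kron n A B) = Mom e m A * Mom e n B"
proof -
  have "Mom e (m*n) (kron n A B) = (\<Sum>a1<m. \<Sum>b1<n. \<Sum>a2<m. \<Sum>b2<n. \<Sum>a3<m. \<Sum>b3<n. \<Sum>a4<m. \<Sum>b4<n.
      (Sv m A a1 a2 a3 a4)^e * (Sv n B b1 b2 b3 b4)^e)"
    unfolding Mom_def sum_split_mult using assms
    by (intro sum.cong refl) (simp add: Sv_kron power_mult_distrib)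
  also have "\<dots> = Mom e m A * Mom e n B"
    unfolding Mom_def by (simp only: sum_prod_rev)
  finally show ?thesis .
qed

lemma nest_perm:
  assumes q: "q permutes {..<n}"
  shows "(\<Sum>a<n. \<Sum>b<n. \<Sum>c<n. \<Sum>d<n. G (q a) (q b) (q c) (q d)) = (\<Sum>a<n. \<Sum>b<n. \<Sum>c<n. \<Sum>d<n. G a b c d)"
proof -
  have 1: "\<And>a b c. (\<Sum>d<n. G (q a) (q b) (q c) (q d)) = (\<Sum>d<n. G (q a) (q b) (q c) d)"
    using sum_perm[OF q] by blast
  have 2: "(\<Sum>c<n. \<Sum>d<n. G (q a) (q b) (q c) d) = (\<Sum>c<n. \<Sum>d<n. G (q a) (q b) c d)" for a b
    using sum_perm[OF q, of "\<lambda>c. (\<Sum>d<n. G (q a) (q b) c d)"] by simp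
  have 3: "(\<Sum>b<n. \<Sum>c<n. \<Sum>d<n. G (q a) (q b) c d) = (\<Sum>b<n. \<Sum>c<n. \<Sum>d<n. G (q a) b c d)" for a
    using sum_perm[OF q, of "\<lambda>b. (\<Sum>c<n. \<Sum>d<n. G (q a) b c d)"] by simp
  have 4: "(\<Sum>a<n. \<Sum>b<n. \<Sum>c<n. \<Sum>d<n. G (q a) b c d) = (\<Sum>a<n. \<Sum>b<n. \<Sum>c<n. \<Sum>d<n. G a b c d)"
    using sum_perm[OF q, of "\<lambda>a. (\<Sum>b<n. \<Sum>c<n. \<Sum>d<n. G a b c d)"] by simp
  show ?thesis by (simp only: 1 2 3 4)
qed

lemma pm1_sq: "x = 1 \<or> x = (-1::int) \<Longrightarrow> x * x = 1" by auto

lemma Mom_equiv: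
  assumes "hadamard_equiv n H K"
  shows "Mom (2*e) n K = Mom (2*e) n H"
proof -
  obtain p q r c where p: "p permutes {..<n}" and q: "q permutes {..<n}"
    and r: "\<forall>i<n. r i = 1 \<or> r i = (-1::int)" and c: "\<forall>j<n. c j = 1 \<or> c j = (-1::int)"
    and K: "\<forall>i<n. \<forall>j<n. K i j = r i * c j * H (p i) (q j)"
    using assms unfolding hadamard_equiv_def by blast
  have pn: "\<And>i. i < n \<Longrightarrow> p i < n" using p by (meson lessThan_iff permutes_in_image)
  have sv: "Sv n K a1 a2 a3 a4 = (c a1 * c a2 * c a3 * c a4) * Sv n H (q a1) (q a2) (q a3) (q a4)"
    if "a1 < n" "a2 < n" "a3 < n" "a4 < n" for a1 a2 a3 a4
  proof -
    have "Sv n K a1 a2 a3 a4 = (\<Sum>i<n. (c a1 * c a2 * c a3 * c a4) * (H (p i) (q a1) * H (p i) (q a2) * H (p i) (q a3) * H (p i) (q a4)))"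
      unfolding Sv_def
    proof (intro sum.cong refl)
      fix i assume "i \<in> {..<n}"
      hence i: "i < n" by simp
      have rr: "r i * r i = 1" using r i pm1_sq by blast
      have "K i a1 * K i a2 * K i a3 * K i a4 = (r i * r i) * (r i * r i) * (c a1 * c a2 * c a3 * c a4) * (H (p i) (q a1) * H (p i) (q a2) * H (p i) (q a3) * H (p i) (q a4))"
        using K i that by (simp add: algebra_simps)
      thus "K i a1 * K i a2 * K i a3 * K i a4 = (c a1 * c a2 * c a3 * c a4) * (H (p i) (q a1) * H (p i) (q a2) * H (p i) (q a3) * H (p i) (q a4))"
        using rr by simp
    qed
    also have "\<dots> = (c a1 * c a2 * c a3 * c a4) * (\<Sum>i<n. H (p i) (q a1) * H (p i) (q a2) * H (p i) (q a3) * H (p i) (q a4))"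
      by (simp add: sum_distrib_left)
    also have "(\<Sum>i<n. H (p i) (q a1) * H (p i) (q a2) * H (p i) (q a3) * H (p i) (q a4)) = Sv n H (q a1) (q a2) (q a3) (q a4)"
      unfolding Sv_def by (rule sum_perm[OF p, of "\<lambda>i. H i (q a1) * H i (q a2) * H i (q a3) * H i (q a4)"])
    finally show ?thesis .
  qed
  have "Mom (2*e) n K = (\<Sum>a<n. \<Sum>b<n. \<Sum>c<n. \<Sum>d<n. (Sv n H (q a) (q b) (q c) (q d)) ^ (2*e))"
    unfolding Mom_def
  proof (intro sum.cong refl)
    fix a1 a2 a3 a4 assume "a1 \<in> {..<n}" "a2 \<in> {..<n}" "a3 \<in> {..<n}" "a4 \<in> {..<n}"
    hence lt: "a1 < n" "a2 < n" "a3 < n" "a4 < n" by auto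
    have cc: "(c a1 * c a2 * c a3 * c a4) ^ 2 = 1"
      using pm1_sq c lt by (simp add: power2_eq_square algebra_simps)
    show "Sv n K a1 a2 a3 a4 ^ (2*e) = Sv n H (q a1) (q a2) (q a3) (q a4) ^ (2*e)"
      using sv[OF lt] cc by (simp add: power_mult power_mult_distrib)
  qed
  also have "\<dots> = Mom (2*e) n H" unfolding Mom_def
    by (rule nest_perm[OF q, of "\<lambda>a b c d. (Sv n H a b c d) ^ (2*e)"])
  finally show ?thesis .
qed


lemma arith_contra:
  fixes c2 b2 b4 :: int
  assumes c2: "c2 > 0" and b4: "b4 > 0" and bb: "b4 < 4096*b2" and kl: "k < l" and lN: "l \<le> N"
    and E4: "(16*c2)^(3*l) * b4^(N-l) = (16*c2)^(3*k) * b4^(N-k)"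
    and E2: "c2^(3*l) * b2^(N-l) = c2^(3*k) * b2^(N-k)"
  shows False
proof -
  define d where "d = l - k"
  have d0: "d > 0" using kl d_def by simp
  have e1: "N - k = (N - l) + d" using kl lN d_def by simp
  have e2: "3*l = 3*k + 3*d" using kl d_def by simp
  have b2: "b2 > 0" using b4 bb by simp
  define X where "X = c2^(3*k)"
  define Y where "Y = c2^(3*d)"
  define U where "U = b4^(N-l)"
  define V where "V = b2^(N-l)"
  have X: "X > 0" "Y > 0" "U > 0" "V > 0" using c2 b4 b2 by (simp_all add: X_def Y_def U_def V_def)
  have h: "(16::int)^(3*d) = 4096^d" by (simp add: power_mult)
  have L: "(16*c2)^(3*l) * b4^(N-l) = (16^(3*k) * X * U) * (16^(3*d) * Y)"
    unfolding e2 X_def Y_def U_def power_add power_mult_distrib by (simp add: algebra_simps)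
  have R: "(16*c2)^(3*k) * b4^(N-k) = (16^(3*k) * X * U) * b4^d"
    unfolding e1 X_def Y_def U_def power_add power_mult_distrib by (simp add: algebra_simps)
  have "(16^(3*k) * X * U) * (4096^d * Y) = (16^(3*k) * X * U) * b4^d"
    using E4 L R h by simp
  hence A: "4096^d * Y = b4^d" using X by simp
  have "(X * V) * Y = (X * V) * b2^d"
    using E2 unfolding e1 e2 X_def Y_def V_def
    by (simp add: power_add algebra_simps)
  hence B: "Y = b2^d" using X by simp
  have "b4^d = (4096*b2)^d" using A B by (simp add: power_mult_distrib)
  moreover have "b4^d < (4096*b2)^d" using power_strict_mono[of b4 "4096*b2" d] bb b4 d0 by simp
  ultimately show False by simp
qed


fun kpow :: "nat \<Rightarrow> (nat \<Rightarrow> nat \<Rightarrow> int) \<Rightarrow> nat \<Rightarrow> (nat \<Rightarrow> nat \<Rightarrow> int)" where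
  "kpow n X 0 = (\<lambda>i j. 1)"
| "kpow n X (Suc k) = kron n (kpow n X k) X"

lemma kpow_hadamard: "hadamard n X \<Longrightarrow> hadamard (n^k) (kpow n X k)"
proof (induction k)
  case 0 show ?case by (simp add: hadamard_def)
next
  case (Suc k)
  then show ?case using kron_hadamard[of "n^k" "kpow n X k" n X] by (simp add: mult.commute)
qed

lemma kpow_graphical: "graphical n X \<Longrightarrow> graphical (n^k) (kpow n X k)"
proof (induction k)
  case 0 show ?case by (simp add: graphical_def)
next
  case (Suc k)
  then show ?case using kron_graphical[of "n^k" "kpow n X k" n X] by (simp add: mult.commute)
qed

lemma kpow_Mom: "0 < n \<Longrightarrow> Mom e (n^k) (kpow n X k) = (Mom e n X)^k"
proof (induction k)
  case 0 show ?case by (simp add: Mom_def Sv_def)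
next
  case (Suc k)
  then show ?case using Mom_kron[of n e "n^k" "kpow n X k" X] by (simp add: mult.commute)
qed

lemma pm1_abs: "x = 1 \<or> x = (-1::int) \<Longrightarrow> \<bar>x\<bar> = 1" by auto

lemma Sv_abs:
  assumes "hadamard n H" "a < n" "b < n" "c < n" "d < n"
  shows "\<bar>Sv n H a b c d\<bar> \<le> int n"
proof -
  have "\<bar>Sv n H a b c d\<bar> \<le> (\<Sum>i<n. \<bar>H i a * H i b * H i c * H i d\<bar>)"
    unfolding Sv_def by (rule sum_abs)
  also have "\<dots> = (\<Sum>i<n. 1)"
  proof (intro sum.cong refl)
    fix i assume "i \<in> {..<n}"
    hence "\<bar>H i a\<bar> = 1" "\<bar>H i b\<bar> = 1" "\<bar>H i c\<bar> = 1" "\<bar>H i d\<bar> = 1"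
      using assms pm1_abs unfolding hadamard_def by auto
    thus "\<bar>H i a * H i b * H i c * H i d\<bar> = 1" by (simp add: abs_mult)
  qed
  finally show ?thesis by simp
qed

lemma Sv_4_le:
  assumes "hadamard n H" "a < n" "b < n" "c < n" "d < n"
  shows "(Sv n H a b c d)^4 \<le> (int n)^2 * (Sv n H a b c d)^2"
proof -
  let ?S = "Sv n H a b c d"
  have "\<bar>?S\<bar>^2 \<le> (int n)^2" using power_mono[OF Sv_abs[OF assms] abs_ge_zero, of 2] by simp
  hence "?S^2 \<le> (int n)^2" by simp
  hence "?S^2 * ?S^2 \<le> (int n)^2 * ?S^2" by (rule mult_right_mono) simp
  moreover have "?S^4 = ?S^2 * ?S^2" by (simp add: power_add[symmetric])
  ultimately show ?thesis by linarith
qed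

lemma nest_strict:
  fixes f g :: "nat \<Rightarrow> nat \<Rightarrow> nat \<Rightarrow> nat \<Rightarrow> int"
  assumes le: "\<And>a b c d. a < n \<Longrightarrow> b < n \<Longrightarrow> c < n \<Longrightarrow> d < n \<Longrightarrow> f a b c d \<le> g a b c d"
    and w: "a0 < n" "b0 < n" "c0 < n" "d0 < n" and lt: "f a0 b0 c0 d0 < g a0 b0 c0 d0"
  shows "(\<Sum>a<n. \<Sum>b<n. \<Sum>c<n. \<Sum>d<n. f a b c d) < (\<Sum>a<n. \<Sum>b<n. \<Sum>c<n. \<Sum>d<n. g a b c d)"
proof -
  have l3: "(\<Sum>d<n. f a b c d) \<le> (\<Sum>d<n. g a b c d)" if "a<n" "b<n" "c<n" for a b c
    by (rule sum_mono) (use le that in auto)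
  have l2: "(\<Sum>c<n. \<Sum>d<n. f a b c d) \<le> (\<Sum>c<n. \<Sum>d<n. g a b c d)" if "a<n" "b<n" for a b
    by (rule sum_mono) (use l3 that in auto)
  have l1: "(\<Sum>b<n. \<Sum>c<n. \<Sum>d<n. f a b c d) \<le> (\<Sum>b<n. \<Sum>c<n. \<Sum>d<n. g a b c d)" if "a<n" for a
    by (rule sum_mono) (use l2 that in auto)
  have s3: "(\<Sum>d<n. f a0 b0 c0 d) < (\<Sum>d<n. g a0 b0 c0 d)"
    by (rule sum_strict_mono_ex1) (use le w lt in auto)
  have s2: "(\<Sum>c<n. \<Sum>d<n. f a0 b0 c d) < (\<Sum>c<n. \<Sum>d<n. g a0 b0 c d)"
    by (rule sum_strict_mono_ex1) (use l3 w s3 in auto)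
  have s1: "(\<Sum>b<n. \<Sum>c<n. \<Sum>d<n. f a0 b c d) < (\<Sum>b<n. \<Sum>c<n. \<Sum>d<n. g a0 b c d)"
    by (rule sum_strict_mono_ex1) (use l2 w s2 in auto)
  show ?thesis
    by (rule sum_strict_mono_ex1) (use l1 w s1 in auto)
qed

lemma Mom_bound:
  assumes "hadamard n H" "a0 < n" "b0 < n" "c0 < n" "d0 < n"
    and "Sv n H a0 b0 c0 d0 \<noteq> 0" "\<bar>Sv n H a0 b0 c0 d0\<bar> < int n"
  shows "Mom 4 n H < (int n)^2 * Mom 2 n H" and "0 < Mom 4 n H"
proof -
  let ?S = "Sv n H a0 b0 c0 d0"
  have "\<bar>?S\<bar>^2 < (int n)^2" using assms(7) by (intro power_strict_mono) auto
  hence sq: "?S^2 < (int n)^2" by simp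
  have pos: "?S^2 > 0" using assms(6) by simp
  have "?S^2 * ?S^2 < (int n)^2 * ?S^2" using sq pos by (rule mult_strict_right_mono)
  moreover have "?S^4 = ?S^2 * ?S^2" by (simp add: power_add[symmetric])
  ultimately have lt: "?S^4 < (int n)^2 * ?S^2" by linarith
  have "Mom 4 n H < (\<Sum>a<n. \<Sum>b<n. \<Sum>c<n. \<Sum>d<n. (int n)^2 * (Sv n H a b c d)^2)"
    unfolding Mom_def
    by (rule nest_strict[of n "\<lambda>a b c d. (Sv n H a b c d)^4" _ a0 b0 c0 d0])
       (use Sv_4_le[OF assms(1)] assms lt in auto)
  also have "\<dots> = (int n)^2 * Mom 2 n H" unfolding Mom_def by (simp add: sum_distrib_left)
  finally show "Mom 4 n H < (int n)^2 * Mom 2 n H" .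
  have "(\<Sum>a<n. \<Sum>b<n. \<Sum>c<n. \<Sum>d<n. (0::int)) < Mom 4 n H"
    unfolding Mom_def
    by (rule nest_strict[of n _ _ a0 b0 c0 d0]) (use assms pos in auto)
  thus "0 < Mom 4 n H" by simp
qed



definition Cm :: "nat \<Rightarrow> nat \<Rightarrow> int" where "Cm i j = (if i = j then -1 else 1)"

lemma Cm_had: "hadamard 4 Cm"
  unfolding hadamard_def by (simp add: Cm_def numeral_eq_Suc less_Suc_eq lessThan_Suc)

lemma Cm_graph: "graphical 4 Cm"
  unfolding graphical_def Cm_def by (intro conjI exI[of _ "-1"]) auto

lemma Cm_M2: "Mom 2 4 Cm = 1024"
  unfolding Mom_def Sv_def Cm_def by code_simp

lemma Cm_M4: "Mom 4 4 Cm = 16384"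
  unfolding Mom_def Sv_def Cm_def by code_simp

definition fBl :: "int list" where "fBl = [1, 1, 1, 1, 1, 1, 1, 1, 1, -1, 1, 1, -1, 1, -1, -1, 1, 1, -1, 1, -1, -1, -1, 1, 1, -1, -1, 1, 1, -1, 1, -1, 1, 1, 1, -1, 1, -1, -1, -1, 1, -1, 1, -1, -1, -1, 1, 1, 1, 1, -1, -1, -1, 1, 1, -1, 1, -1, -1, -1, 1, 1, -1, 1]"
definition fB :: "nat \<Rightarrow> int" where "fB d = fBl ! d"
definition Bm :: "nat \<Rightarrow> nat \<Rightarrow> int" where "Bm i j = fB (xor i j)"

lemma xor_lt: "(a::nat) < 64 \<Longrightarrow> b < 64 \<Longrightarrow> xor a b < 64"
proof -
  assume "a < 64" "b < 64"
  hence "take_bit 6 a = a" "take_bit 6 b = b" by (simp_all only: take_bit_nat_eq_self_iff) simp_all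
  hence "take_bit 6 (xor a b) = xor a b" by (simp add: take_bit_xor)
  hence "xor a b < 2^6" by (simp only: take_bit_nat_eq_self_iff)
  thus ?thesis by simp
qed

lemma fB_pm: "d < 64 \<Longrightarrow> fB d = 1 \<or> fB d = -1"
proof -
  assume d: "d < 64"
  have "list_all (\<lambda>x. x = 1 \<or> x = -1) fBl" by (simp add: fBl_def)
  moreover have "length fBl = 64" by (simp add: fBl_def)
  ultimately show ?thesis unfolding fB_def using d by (simp add: list_all_length)
qed

lemma ac0: "(\<Sum>z<64. fB z * fB (xor z 0)) = (if (0::nat) = 0 then 64 else 0)"
  unfolding fB_def fBl_def by code_simp
lemma ac1: "(\<Sum>z<64. fB z * fB (xor z 1)) = (if (1::nat) = 0 then 64 else 0)"
  unfolding fB_def fBl_def by code_simp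
lemma ac2: "(\<Sum>z<64. fB z * fB (xor z 2)) = (if (2::nat) = 0 then 64 else 0)"
  unfolding fB_def fBl_def by code_simp
lemma ac3: "(\<Sum>z<64. fB z * fB (xor z 3)) = (if (3::nat) = 0 then 64 else 0)"
  unfolding fB_def fBl_def by code_simp
lemma ac4: "(\<Sum>z<64. fB z * fB (xor z 4)) = (if (4::nat) = 0 then 64 else 0)"
  unfolding fB_def fBl_def by code_simp
lemma ac5: "(\<Sum>z<64. fB z * fB (xor z 5)) = (if (5::nat) = 0 then 64 else 0)"
  unfolding fB_def fBl_def by code_simp
lemma ac6: "(\<Sum>z<64. fB z * fB (xor z 6)) = (if (6::nat) = 0 then 64 else 0)"
  unfolding fB_def fBl_def by code_simp
lemma ac7: "(\<Sum>z<64. fB z * fB (xor z 7)) = (if (7::nat) = 0 then 64 else 0)"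
  unfolding fB_def fBl_def by code_simp
lemma ac8: "(\<Sum>z<64. fB z * fB (xor z 8)) = (if (8::nat) = 0 then 64 else 0)"
  unfolding fB_def fBl_def by code_simp
lemma ac9: "(\<Sum>z<64. fB z * fB (xor z 9)) = (if (9::nat) = 0 then 64 else 0)"
  unfolding fB_def fBl_def by code_simp
lemma ac10: "(\<Sum>z<64. fB z * fB (xor z 10)) = (if (10::nat) = 0 then 64 else 0)"
  unfolding fB_def fBl_def by code_simp
lemma ac11: "(\<Sum>z<64. fB z * fB (xor z 11)) = (if (11::nat) = 0 then 64 else 0)"
  unfolding fB_def fBl_def by code_simp
lemma ac12: "(\<Sum>z<64. fB z * fB (xor z 12)) = (if (12::nat) = 0 then 64 else 0)"
  unfolding fB_def fBl_def by code_simp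
lemma ac13: "(\<Sum>z<64. fB z * fB (xor z 13)) = (if (13::nat) = 0 then 64 else 0)"
  unfolding fB_def fBl_def by code_simp
lemma ac14: "(\<Sum>z<64. fB z * fB (xor z 14)) = (if (14::nat) = 0 then 64 else 0)"
  unfolding fB_def fBl_def by code_simp
lemma ac15: "(\<Sum>z<64. fB z * fB (xor z 15)) = (if (15::nat) = 0 then 64 else 0)"
  unfolding fB_def fBl_def by code_simp
lemma ac16: "(\<Sum>z<64. fB z * fB (xor z 16)) = (if (16::nat) = 0 then 64 else 0)"
  unfolding fB_def fBl_def by code_simp
lemma ac17: "(\<Sum>z<64. fB z * fB (xor z 17)) = (if (17::nat) = 0 then 64 else 0)"
  unfolding fB_def fBl_def by code_simp
lemma ac18: "(\<Sum>z<64. fB z * fB (xor z 18)) = (if (18::nat) = 0 then 64 else 0)"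
  unfolding fB_def fBl_def by code_simp
lemma ac19: "(\<Sum>z<64. fB z * fB (xor z 19)) = (if (19::nat) = 0 then 64 else 0)"
  unfolding fB_def fBl_def by code_simp
lemma ac20: "(\<Sum>z<64. fB z * fB (xor z 20)) = (if (20::nat) = 0 then 64 else 0)"
  unfolding fB_def fBl_def by code_simp
lemma ac21: "(\<Sum>z<64. fB z * fB (xor z 21)) = (if (21::nat) = 0 then 64 else 0)"
  unfolding fB_def fBl_def by code_simp
lemma ac22: "(\<Sum>z<64. fB z * fB (xor z 22)) = (if (22::nat) = 0 then 64 else 0)"
  unfolding fB_def fBl_def by code_simp
lemma ac23: "(\<Sum>z<64. fB z * fB (xor z 23)) = (if (23::nat) = 0 then 64 else 0)"
  unfolding fB_def fBl_def by code_simp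
lemma ac24: "(\<Sum>z<64. fB z * fB (xor z 24)) = (if (24::nat) = 0 then 64 else 0)"
  unfolding fB_def fBl_def by code_simp
lemma ac25: "(\<Sum>z<64. fB z * fB (xor z 25)) = (if (25::nat) = 0 then 64 else 0)"
  unfolding fB_def fBl_def by code_simp
lemma ac26: "(\<Sum>z<64. fB z * fB (xor z 26)) = (if (26::nat) = 0 then 64 else 0)"
  unfolding fB_def fBl_def by code_simp
lemma ac27: "(\<Sum>z<64. fB z * fB (xor z 27)) = (if (27::nat) = 0 then 64 else 0)"
  unfolding fB_def fBl_def by code_simp
lemma ac28: "(\<Sum>z<64. fB z * fB (xor z 28)) = (if (28::nat) = 0 then 64 else 0)"
  unfolding fB_def fBl_def by code_simp
lemma ac29: "(\<Sum>z<64. fB z * fB (xor z 29)) = (if (29::nat) = 0 then 64 else 0)"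
  unfolding fB_def fBl_def by code_simp
lemma ac30: "(\<Sum>z<64. fB z * fB (xor z 30)) = (if (30::nat) = 0 then 64 else 0)"
  unfolding fB_def fBl_def by code_simp
lemma ac31: "(\<Sum>z<64. fB z * fB (xor z 31)) = (if (31::nat) = 0 then 64 else 0)"
  unfolding fB_def fBl_def by code_simp
lemma ac32: "(\<Sum>z<64. fB z * fB (xor z 32)) = (if (32::nat) = 0 then 64 else 0)"
  unfolding fB_def fBl_def by code_simp
lemma ac33: "(\<Sum>z<64. fB z * fB (xor z 33)) = (if (33::nat) = 0 then 64 else 0)"
  unfolding fB_def fBl_def by code_simp
lemma ac34: "(\<Sum>z<64. fB z * fB (xor z 34)) = (if (34::nat) = 0 then 64 else 0)"
  unfolding fB_def fBl_def by code_simp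
lemma ac35: "(\<Sum>z<64. fB z * fB (xor z 35)) = (if (35::nat) = 0 then 64 else 0)"
  unfolding fB_def fBl_def by code_simp
lemma ac36: "(\<Sum>z<64. fB z * fB (xor z 36)) = (if (36::nat) = 0 then 64 else 0)"
  unfolding fB_def fBl_def by code_simp
lemma ac37: "(\<Sum>z<64. fB z * fB (xor z 37)) = (if (37::nat) = 0 then 64 else 0)"
  unfolding fB_def fBl_def by code_simp
lemma ac38: "(\<Sum>z<64. fB z * fB (xor z 38)) = (if (38::nat) = 0 then 64 else 0)"
  unfolding fB_def fBl_def by code_simp
lemma ac39: "(\<Sum>z<64. fB z * fB (xor z 39)) = (if (39::nat) = 0 then 64 else 0)"
  unfolding fB_def fBl_def by code_simp
lemma ac40: "(\<Sum>z<64. fB z * fB (xor z 40)) = (if (40::nat) = 0 then 64 else 0)"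
  unfolding fB_def fBl_def by code_simp
lemma ac41: "(\<Sum>z<64. fB z * fB (xor z 41)) = (if (41::nat) = 0 then 64 else 0)"
  unfolding fB_def fBl_def by code_simp
lemma ac42: "(\<Sum>z<64. fB z * fB (xor z 42)) = (if (42::nat) = 0 then 64 else 0)"
  unfolding fB_def fBl_def by code_simp
lemma ac43: "(\<Sum>z<64. fB z * fB (xor z 43)) = (if (43::nat) = 0 then 64 else 0)"
  unfolding fB_def fBl_def by code_simp
lemma ac44: "(\<Sum>z<64. fB z * fB (xor z 44)) = (if (44::nat) = 0 then 64 else 0)"
  unfolding fB_def fBl_def by code_simp
lemma ac45: "(\<Sum>z<64. fB z * fB (xor z 45)) = (if (45::nat) = 0 then 64 else 0)"
  unfolding fB_def fBl_def by code_simp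
lemma ac46: "(\<Sum>z<64. fB z * fB (xor z 46)) = (if (46::nat) = 0 then 64 else 0)"
  unfolding fB_def fBl_def by code_simp
lemma ac47: "(\<Sum>z<64. fB z * fB (xor z 47)) = (if (47::nat) = 0 then 64 else 0)"
  unfolding fB_def fBl_def by code_simp
lemma ac48: "(\<Sum>z<64. fB z * fB (xor z 48)) = (if (48::nat) = 0 then 64 else 0)"
  unfolding fB_def fBl_def by code_simp
lemma ac49: "(\<Sum>z<64. fB z * fB (xor z 49)) = (if (49::nat) = 0 then 64 else 0)"
  unfolding fB_def fBl_def by code_simp
lemma ac50: "(\<Sum>z<64. fB z * fB (xor z 50)) = (if (50::nat) = 0 then 64 else 0)"
  unfolding fB_def fBl_def by code_simp
lemma ac51: "(\<Sum>z<64. fB z * fB (xor z 51)) = (if (51::nat) = 0 then 64 else 0)"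
  unfolding fB_def fBl_def by code_simp
lemma ac52: "(\<Sum>z<64. fB z * fB (xor z 52)) = (if (52::nat) = 0 then 64 else 0)"
  unfolding fB_def fBl_def by code_simp
lemma ac53: "(\<Sum>z<64. fB z * fB (xor z 53)) = (if (53::nat) = 0 then 64 else 0)"
  unfolding fB_def fBl_def by code_simp
lemma ac54: "(\<Sum>z<64. fB z * fB (xor z 54)) = (if (54::nat) = 0 then 64 else 0)"
  unfolding fB_def fBl_def by code_simp
lemma ac55: "(\<Sum>z<64. fB z * fB (xor z 55)) = (if (55::nat) = 0 then 64 else 0)"
  unfolding fB_def fBl_def by code_simp
lemma ac56: "(\<Sum>z<64. fB z * fB (xor z 56)) = (if (56::nat) = 0 then 64 else 0)"
  unfolding fB_def fBl_def by code_simp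
lemma ac57: "(\<Sum>z<64. fB z * fB (xor z 57)) = (if (57::nat) = 0 then 64 else 0)"
  unfolding fB_def fBl_def by code_simp
lemma ac58: "(\<Sum>z<64. fB z * fB (xor z 58)) = (if (58::nat) = 0 then 64 else 0)"
  unfolding fB_def fBl_def by code_simp
lemma ac59: "(\<Sum>z<64. fB z * fB (xor z 59)) = (if (59::nat) = 0 then 64 else 0)"
  unfolding fB_def fBl_def by code_simp
lemma ac60: "(\<Sum>z<64. fB z * fB (xor z 60)) = (if (60::nat) = 0 then 64 else 0)"
  unfolding fB_def fBl_def by code_simp
lemma ac61: "(\<Sum>z<64. fB z * fB (xor z 61)) = (if (61::nat) = 0 then 64 else 0)"
  unfolding fB_def fBl_def by code_simp
lemma ac62: "(\<Sum>z<64. fB z * fB (xor z 62)) = (if (62::nat) = 0 then 64 else 0)"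
  unfolding fB_def fBl_def by code_simp
lemma ac63: "(\<Sum>z<64. fB z * fB (xor z 63)) = (if (63::nat) = 0 then 64 else 0)"
  unfolding fB_def fBl_def by code_simp
lemma L64: "P 0 \<Longrightarrow> P 1 \<Longrightarrow> P 2 \<Longrightarrow> P 3 \<Longrightarrow> P 4 \<Longrightarrow> P 5 \<Longrightarrow> P 6 \<Longrightarrow> P 7 \<Longrightarrow> P 8 \<Longrightarrow> P 9 \<Longrightarrow> P 10 \<Longrightarrow> P 11 \<Longrightarrow> P 12 \<Longrightarrow> P 13 \<Longrightarrow> P 14 \<Longrightarrow> P 15 \<Longrightarrow> P 16 \<Longrightarrow> P 17 \<Longrightarrow> P 18 \<Longrightarrow> P 19 \<Longrightarrow> P 20 \<Longrightarrow> P 21 \<Longrightarrow> P 22 \<Longrightarrow> P 23 \<Longrightarrow> P 24 \<Longrightarrow> P 25 \<Longrightarrow> P 26 \<Longrightarrow> P 27 \<Longrightarrow> P 28 \<Longrightarrow> P 29 \<Longrightarrow> P 30 \<Longrightarrow> P 31 \<Longrightarrow> P 32 \<Longrightarrow> P 33 \<Longrightarrow> P 34 \<Longrightarrow> P 35 \<Longrightarrow> P 36 \<Longrightarrow> P 37 \<Longrightarrow> P 38 \<Longrightarrow> P 39 \<Longrightarrow> P 40 \<Longrightarrow> P 41 \<Longrightarrow> P 42 \<Longrightarrow> P 43 \<Longrightarrow> P 44 \<Longrightarrow> P 45 \<Longrightarrow> P 46 \<Longrightarrow> P 47 \<Longrightarrow> P 48 \<Longrightarrow> P 49 \<Longrightarrow>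 P 50 \<Longrightarrow> P 51 \<Longrightarrow> P 52 \<Longrightarrow> P 53 \<Longrightarrow> P 54 \<Longrightarrow> P 55 \<Longrightarrow> P 56 \<Longrightarrow> P 57 \<Longrightarrow> P 58 \<Longrightarrow> P 59 \<Longrightarrow> P 60 \<Longrightarrow> P 61 \<Longrightarrow> P 62 \<Longrightarrow> P (63::nat) \<Longrightarrow> \<forall>d<64. P d"
  by (simp add: less_Suc_eq numeral_eq_Suc)
lemma acall: "\<forall>d<64. (\<Sum>z<64. fB z * fB (xor z d)) = (if d = 0 then 64 else 0)"
  by (rule L64[of "\<lambda>d. (\<Sum>z<64. fB z * fB (xor z d)) = (if d = 0 then 64 else 0)"]) (rule ac0 ac1 ac2 ac3 ac4 ac5 ac6 ac7 ac8 ac9 ac10 ac11 ac12 ac13 ac14 ac15 ac16 ac17 ac18 ac19 ac20 ac21 ac22 ac23 ac24 ac25 ac26 ac27 ac28 ac29 ac30 ac31 ac32 ac33 ac34 ac35 ac36 ac37 ac38 ac39 ac40 ac41 ac42 ac43 ac44 ac45 ac46 ac47 ac48 ac49 ac50 ac51 ac52 ac53 ac54 ac55 ac56 ac57 ac58 ac59 ac60 ac61 ac62 ac63)+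

lemma xr1: "xor (j::nat) (xor i z) = xor z (xor i j)"
  by (simp add: xor.commute xor.left_commute)
lemma xr2: "xor (i::nat) (xor i z) = z"
  by (simp add: xor.assoc[symmetric])

lemma Bm_sum: assumes "i < 64" "j < 64"
  shows "(\<Sum>k<64. Bm i k * Bm j k) = (\<Sum>z<64. fB z * fB (xor z (xor i j)))"
proof -
  have bij: "bij_betw (\<lambda>z. xor i z) {..<64::nat} {..<64}"
    by (rule bij_betw_byWitness[where f' = "\<lambda>z. xor i z"])
       (auto simp: xor.assoc[symmetric] intro: xor_lt assms)
  have "(\<Sum>k<64. Bm i k * Bm j k) = (\<Sum>z<64. Bm i (xor i z) * Bm j (xor i z))"
    using sum.reindex_bij_betw[OF bij, of "\<lambda>k. Bm i k * Bm j k"] by simp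
  also have "\<dots> = (\<Sum>z<64. fB z * fB (xor z (xor i j)))"
    unfolding Bm_def by (intro sum.cong refl) (simp add: xr1 xr2)
  finally show ?thesis .
qed

lemma xor_eq0: "xor (a::nat) b = 0 \<longleftrightarrow> a = b"
  by (metis xor.assoc xor.left_neutral xor_self_eq)

lemma Bm_had: "hadamard 64 Bm"
  unfolding hadamard_def
proof (intro conjI allI impI)
  fix i j :: nat assume "i < 64" "j < 64"
  thus "Bm i j = 1 \<or> Bm i j = -1" unfolding Bm_def by (intro fB_pm xor_lt)
  show "(\<Sum>k<64. Bm i k * Bm j k) = (if i = j then int 64 else 0)"
    using Bm_sum[OF \<open>i<64\<close> \<open>j<64\<close>] acall xor_lt[OF \<open>i<64\<close> \<open>j<64\<close>] xor_eq0[of i j] by simp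
qed

lemma Bm_graph: "graphical 64 Bm"
  unfolding graphical_def Bm_def by (intro conjI exI[of _ "fB 0"]) (simp_all add: xor.commute)

lemma Bm_wit: "Sv 64 Bm 0 1 2 4 = 16"
  unfolding Sv_def Bm_def fB_def fBl_def by code_simp



theorem corollary7p2:
  fixes N :: nat
  assumes "N > 0"
  shows "\<exists>m::nat. m > 0 \<and>
           (\<exists>Hs :: nat \<Rightarrow> nat \<Rightarrow> nat \<Rightarrow> int.
              (\<forall>k<N. graphical_hadamard (4 ^ m) (Hs k)) \<and>
              (\<forall>k<N. \<forall>l<N. k \<noteq> l \<longrightarrow> \<not> hadamard_equiv (4 ^ m) (Hs k) (Hs l)))"
proof -
  define Hs where "Hs k = kron (64^(N-k)) (kpow 4 Cm (3*k)) (kpow 64 Bm (N-k))" for k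
  have ord: "(4::nat)^(3*k) * 64^(N-k) = 4^(3*N)" if "k \<le> N" for k
  proof -
    have "(64::nat)^(N-k) = 4^(3*(N-k))" by (simp add: power_mult)
    hence "(4::nat)^(3*k) * 64^(N-k) = 4^(3*k + 3*(N-k))" by (simp add: power_add)
    also have "3*k + 3*(N-k) = 3*N" using that by simp
    finally show ?thesis .
  qed
  have GH: "graphical_hadamard (4^(3*N)) (Hs k)" if "k < N" for k
  proof -
    have "hadamard (4^(3*k) * 64^(N-k)) (Hs k)"
      unfolding Hs_def by (rule kron_hadamard[OF kpow_hadamard[OF Cm_had] kpow_hadamard[OF Bm_had]])
    moreover have "graphical (4^(3*k) * 64^(N-k)) (Hs k)"
      unfolding Hs_def by (rule kron_graphical[OF kpow_graphical[OF Cm_graph] kpow_graphical[OF Bm_graph]])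
    ultimately show ?thesis using ord[of k] that unfolding graphical_hadamard_def by simp
  qed
  have MM: "Mom e (4^(3*N)) (Hs k) = (Mom e 4 Cm)^(3*k) * (Mom e 64 Bm)^(N-k)" if "k \<le> N" for k e
  proof -
    have "Mom e (4^(3*k) * 64^(N-k)) (Hs k) = Mom e (4^(3*k)) (kpow 4 Cm (3*k)) * Mom e (64^(N-k)) (kpow 64 Bm (N-k))"
      unfolding Hs_def by (rule Mom_kron) simp
    thus ?thesis using ord[OF that] by (simp add: kpow_Mom)
  qed
  have wb: "Mom 4 64 Bm < (int 64)^2 * Mom 2 64 Bm" "0 < Mom 4 64 Bm"
    using Mom_bound[OF Bm_had, of 0 1 2 4] Bm_wit by simp_all
  have c4: "Mom 4 4 Cm = 16 * Mom 2 4 Cm" and c2: "Mom 2 4 Cm > 0"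
    using Cm_M2 Cm_M4 by simp_all
  have key: False if kl: "k < l" "l < N" and E: "hadamard_equiv (4^(3*N)) (Hs k) (Hs l) \<or> hadamard_equiv (4^(3*N)) (Hs l) (Hs k)" for k l
  proof -
    have Eq: "Mom (2*e) (4^(3*N)) (Hs l) = Mom (2*e) (4^(3*N)) (Hs k)" for e
      using E
    proof
      assume "hadamard_equiv (4^(3*N)) (Hs k) (Hs l)" thus ?thesis by (rule Mom_equiv)
    next
      assume "hadamard_equiv (4^(3*N)) (Hs l) (Hs k)" thus ?thesis by (rule Mom_equiv[symmetric])
    qed
    have E4: "Mom 4 (4^(3*N)) (Hs l) = Mom 4 (4^(3*N)) (Hs k)" using Eq[of 2] by simp
    have E2: "Mom 2 (4^(3*N)) (Hs l) = Mom 2 (4^(3*N)) (Hs k)" using Eq[of 1] by simp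
    have lN: "l \<le> N" "k \<le> N" using kl by simp_all
    have E4': "(16 * Mom 2 4 Cm)^(3*l) * (Mom 4 64 Bm)^(N-l) = (16 * Mom 2 4 Cm)^(3*k) * (Mom 4 64 Bm)^(N-k)"
      using E4 unfolding MM[OF lN(1)] MM[OF lN(2)] c4 .
    have E2': "(Mom 2 4 Cm)^(3*l) * (Mom 2 64 Bm)^(N-l) = (Mom 2 4 Cm)^(3*k) * (Mom 2 64 Bm)^(N-k)"
      using E2 unfolding MM[OF lN(1)] MM[OF lN(2)] .
    have bb: "Mom 4 64 Bm < 4096 * Mom 2 64 Bm" using wb(1) by simp
    show False by (rule arith_contra[OF c2 wb(2) bb kl(1) lN(1) E4' E2'])
  qed
  show ?thesis
  proof (intro exI[of _ "3*N"] conjI exI[of _ Hs] allI impI)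
    show "0 < 3*N" using assms by simp
  next
    fix k assume "k < N" thus "graphical_hadamard (4^(3*N)) (Hs k)" by (rule GH)
  next
    fix k l assume "k < N" "l < N" "k \<noteq> l"
    show "\<not> hadamard_equiv (4^(3*N)) (Hs k) (Hs l)"
    proof
      assume h: "hadamard_equiv (4^(3*N)) (Hs k) (Hs l)"
      show False
      proof (cases "k < l")
        case True thus False using key[of k l] h \<open>l<N\<close> by blast
      next
        case False hence "l < k" using \<open>k\<noteq>l\<close> by simp
        thus False using key[of l k] h \<open>k<N\<close> by blast
      qed
    qed
  qed
qed
end
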